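(* Finite memory winning strategies are not sufficient in interval mean-payoff games: there exists an interval mean-payoff game $(G,I)$ in which Eve has a winning strategy but has no winning strategy with finite memory.
   Context: A game graph is a tuple $G=(V,V_\exists,E,w,q_0)$ where $(V,E)$ is a finite directed graph in which every vertex has an outgoing edge, $w:E\to\mathbb{Z}$ is an integer edge-weight function, $V_\exists\subseteq V$ are Eve's vertices (the rest are Adam's), and $q_0\in V$ is the initial vertex. A play is an infinite path $\pi=v_0v_1\cdots$ with $v_0=q_0$; write $w(\pi[..k])=\sum_{i=0}^{k-1}w(v_i,v_{i+1})$. A strategy for a player maps finite play prefixes ending in one of that player's vertices to a successor vertex; it has finite memory if it can be realized as the output of a finite-state machine (with finitely many memory states) reading the play. The (liminf) mean-payoff of a play is $\underline{MP}(\pi)=\liminf_{k\to\infty}\frac1k w(\pi[..k])$. An interval mean-payoff game is a pair $(G,I)$ with $I$ a finite union of real intervals; a play is winning for Eve iff $\underline{MP}(\pi)\in I$, and winning for Adam otherwise. A strategy is winning for a player if all plays consistent with it are winning for that player. *)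

theory Defs
  imports "HOL-Analysis.Analysis"
begin

text \<open>Weights are integer-valued on edges
  (w is given as a function on pairs of vertices; only its values on E matter).\<close>
definition game_graph :: "'v set \<Rightarrow> 'v set \<Rightarrow> ('v \<times> 'v) set \<Rightarrow> 'v \<Rightarrow> bool" where
  "game_graph V VE E q0 \<longleftrightarrow> finite V \<and> E \<subseteq> V \<times> V \<and> (\<forall>v\<in>V. \<exists>u. (v, u) \<in> E)
      \<and> VE \<subseteq> V \<and> q0 \<in> V"

definition is_play :: "('v \<times> 'v) set \<Rightarrow> 'v \<Rightarrow> (nat \<Rightarrow> 'v) \<Rightarrow> bool" where
  "is_play E q0 \<pi> \<longleftrightarrow> \<pi> 0 = q0 \<and> (\<forall>i. (\<pi> i, \<pi> (Suc i)) \<in> E)"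

definition is_prefix :: "('v \<times> 'v) set \<Rightarrow> 'v \<Rightarrow> 'v list \<Rightarrow> bool" where
  "is_prefix E q0 h \<longleftrightarrow> h \<noteq> [] \<and> hd h = q0 \<and> (\<forall>i. Suc i < length h \<longrightarrow> (h ! i, h ! Suc i) \<in> E)"

definition eve_strategy :: "'v set \<Rightarrow> ('v \<times> 'v) set \<Rightarrow> 'v \<Rightarrow> ('v list \<Rightarrow> 'v) \<Rightarrow> bool" where
  "eve_strategy VE E q0 \<sigma> \<longleftrightarrow>
     (\<forall>h. is_prefix E q0 h \<and> last h \<in> VE \<longrightarrow> (last h, \<sigma> h) \<in> E)"

definition consistent_eve :: "'v set \<Rightarrow> ('v list \<Rightarrow> 'v) \<Rightarrow> (nat \<Rightarrow> 'v) \<Rightarrow> bool" where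
  "consistent_eve VE \<sigma> \<pi> \<longleftrightarrow> (\<forall>i. \<pi> i \<in> VE \<longrightarrow> \<pi> (Suc i) = \<sigma> (map \<pi> [0..<Suc i]))"

text \<open>Finite memory: the strategy is the output of a finite-state (Mealy) machine with memory
  states from a finite set M (encoded as naturals), initial state m0, update function upd
  reading the vertices of the play, and output function nxt.\<close>
definition finite_memory :: "'v set \<Rightarrow> 'v set \<Rightarrow> ('v \<times> 'v) set \<Rightarrow> 'v \<Rightarrow> ('v list \<Rightarrow> 'v) \<Rightarrow> bool" where
  "finite_memory V VE E q0 \<sigma> \<longleftrightarrow>
     (\<exists>(M :: nat set) m0 upd nxt. finite M \<and> m0 \<in> M \<and> (\<forall>m\<in>M. \<forall>v\<in>V. upd m v \<in> M) \<and>
        (\<forall>h. is_prefix E q0 h \<and> last h \<in> VE \<longrightarrow> \<sigma> h = nxt (foldl upd m0 h) (last h)))"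

definition path_weight :: "('v \<Rightarrow> 'v \<Rightarrow> int) \<Rightarrow> (nat \<Rightarrow> 'v) \<Rightarrow> nat \<Rightarrow> int" where
  "path_weight w \<pi> k = (\<Sum>i<k. w (\<pi> i) (\<pi> (Suc i)))"

definition mean_payoff :: "('v \<Rightarrow> 'v \<Rightarrow> int) \<Rightarrow> (nat \<Rightarrow> 'v) \<Rightarrow> ereal" where
  "mean_payoff w \<pi> = liminf (\<lambda>k. ereal (real_of_int (path_weight w \<pi> k) / real k))"

definition finite_interval_union :: "real set \<Rightarrow> bool" where
  "finite_interval_union I \<longleftrightarrow> (\<exists>F. finite F \<and> (\<forall>J\<in>F. is_interval J) \<and> I = \<Union>F)"

definition eve_wins_play :: "('v \<Rightarrow> 'v \<Rightarrow> int) \<Rightarrow> real set \<Rightarrow> (nat \<Rightarrow> 'v) \<Rightarrow> bool" where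
  "eve_wins_play w I \<pi> \<longleftrightarrow> (\<exists>r. mean_payoff w \<pi> = ereal r \<and> r \<in> I)"

definition winning_eve :: "'v set \<Rightarrow> ('v \<times> 'v) set \<Rightarrow> ('v \<Rightarrow> 'v \<Rightarrow> int) \<Rightarrow> 'v \<Rightarrow> real set
    \<Rightarrow> ('v list \<Rightarrow> 'v) \<Rightarrow> bool" where
  "winning_eve VE E w q0 I \<sigma> \<longleftrightarrow> eve_strategy VE E q0 \<sigma> \<and>
     (\<forall>\<pi>. is_play E q0 \<pi> \<and> consistent_eve VE \<sigma> \<pi> \<longrightarrow> eve_wins_play w I \<pi>)"

end

theory Submission
  imports Defs
begin

lemma sqrt2_irr: "sqrt 2 \<notin> \<rat>"
proof
  assume "sqrt 2 \<in> \<rat>"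
  then obtain m n :: nat
    where n: "n \<noteq> 0"
      and sqrt_rat: "\<bar>sqrt 2\<bar> = m / n"
      and cop: "coprime m n" by (rule Rats_abs_nat_div_natE)
  have eq: "m\<^sup>2 = 2 * n\<^sup>2"
  proof -
    from n and sqrt_rat have "real m = \<bar>sqrt 2\<bar> * n" by simp
    then have "real (m\<^sup>2) = (sqrt 2)\<^sup>2 * real (n\<^sup>2)" by (simp add: power_mult_distrib)
    also have "(sqrt 2)\<^sup>2 = 2" by simp
    finally show ?thesis by (metis of_nat_eq_iff of_nat_mult of_nat_numeral)
  qed
  have "2 dvd m \<and> 2 dvd n"
  proof
    from eq have "2 dvd m\<^sup>2" ..
    then show "2 dvd m" by (simp add: even_power)
    then obtain k where "m = 2 * k" ..
    with eq have "2 * n\<^sup>2 = 2\<^sup>2 * k\<^sup>2" by algebra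
    then have "n\<^sup>2 = 2 * k\<^sup>2" by (simp add: power2_eq_square)
    then have "2 dvd n\<^sup>2" ..
    then show "2 dvd n" by (simp add: even_power)
  qed
  then have "2 dvd gcd m n" by simp
  with cop show False by simp
qed

definition V0 :: "nat set" where "V0 = {0,1}"
definition w0 :: "nat \<Rightarrow> nat \<Rightarrow> int" where "w0 u v = (if v = 1 then 1 else 0)"
definition alpha :: real where "alpha = sqrt 2 - 1"

lemma alpha_bounds: "0 \<le> alpha" "alpha \<le> 1"
proof -
  have "1 \<le> sqrt 2" by simp
  moreover have "sqrt 2 \<le> 2" by (simp add: real_sqrt_le_iff real_le_lsqrt)
  ultimately show "0 \<le> alpha" "alpha \<le> 1" unfolding alpha_def by auto
qed

lemma alpha_irr: "alpha \<notin> \<rat>"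
proof
  assume "alpha \<in> \<rat>"
  then have "alpha + 1 \<in> \<rat>" by simp
  then show False using sqrt2_irr by (simp add: alpha_def)
qed

lemma tendsto_from_bound:
  fixes x :: "nat \<Rightarrow> real"
  assumes "\<And>k. \<bar>x k - c * real k\<bar> \<le> B"
  shows "(\<lambda>k. x k / real k) \<longlonglongrightarrow> c"
proof -
  have "(\<lambda>k. x k / real k - c) \<longlonglongrightarrow> 0"
  proof (rule Lim_null_comparison)
    show "eventually (\<lambda>k. norm (x k / real k - c) \<le> B / real k) sequentially"
      using eventually_gt_at_top[of 0]
    proof eventually_elim
      case (elim k)
      then have "x k / real k - c = (x k - c * real k) / real k" by (simp add: field_simps)
      then show ?case using assms[of k] elim by (simp add: abs_divide divide_right_mono)
    qed
    show "(\<lambda>k. B / real k) \<longlonglongrightarrow> 0" by (rule lim_const_over_n)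
  qed
  then show ?thesis by (simp add: LIM_zero_iff)
qed

lemma mp_from_bound:
  assumes "\<And>k. \<bar>real_of_int (path_weight w \<pi> k) - c * real k\<bar> \<le> B"
  shows "mean_payoff w \<pi> = ereal c"
  unfolding mean_payoff_def
  apply (rule lim_imp_Liminf, simp)
  using tendsto_from_bound[OF assms] by simp

lemma sum_split_add: "(\<Sum>t<a+b. f t) = (\<Sum>t<a. f t) + (\<Sum>t<b. f (a+t))"
  for f :: "nat \<Rightarrow> 'a::comm_monoid_add"
  by (induction b) (auto simp: add.assoc)

definition sig :: "nat list \<Rightarrow> nat" where
  "sig h = (let k = length h - 1 in
     if real_of_int (\<Sum>j<k. w0 (h!j) (h!Suc j)) < alpha * real k then 1 else 0)"

lemma sig_win: "winning_eve V0 (V0 \<times> V0) w0 0 {alpha} sig"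
  unfolding winning_eve_def
proof (intro conjI allI impI)
  show "eve_strategy V0 (V0 \<times> V0) 0 sig"
    unfolding eve_strategy_def sig_def V0_def by (auto simp: Let_def)
  fix \<pi> assume a: "is_play (V0 \<times> V0) 0 \<pi> \<and> consistent_eve V0 sig \<pi>"
  have inV: "\<pi> i \<in> V0" for i using a unfolding is_play_def by auto
  have step: "\<pi> (Suc i) = (if real_of_int (path_weight w0 \<pi> i) < alpha * real i then 1 else 0)" for i
  proof -
    have "\<pi> (Suc i) = sig (map \<pi> [0..<Suc i])" using a inV unfolding consistent_eve_def by blast
    moreover have "(\<Sum>j<i. w0 (map \<pi> [0..<Suc i] ! j) (map \<pi> [0..<Suc i] ! Suc j)) = path_weight w0 \<pi> i"
      unfolding path_weight_def
      by (rule sum.cong) (auto simp: nth_map nth_upt simp del: upt_Suc)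
    ultimately show ?thesis unfolding sig_def Let_def
      by (simp del: upt_Suc of_int_sum)
  qed
  have bnd: "\<bar>real_of_int (path_weight w0 \<pi> k) - alpha * real k\<bar> \<le> 1" for k
  proof (induction k)
    case 0 then show ?case by (simp add: path_weight_def)
  next
    case (Suc k)
    have pS: "path_weight w0 \<pi> (Suc k) = path_weight w0 \<pi> k + w0 (\<pi> k) (\<pi> (Suc k))"
      by (simp add: path_weight_def)
    show ?case
    proof (cases "real_of_int (path_weight w0 \<pi> k) < alpha * real k")
      case True
      then have "w0 (\<pi> k) (\<pi> (Suc k)) = 1" using step[of k] by (simp add: w0_def)
      then show ?thesis using pS Suc True alpha_bounds by (simp add: algebra_simps)
    next
      case False
      then have "w0 (\<pi> k) (\<pi> (Suc k)) = 0" using step[of k] by (simp add: w0_def)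
      then show ?thesis using pS Suc False alpha_bounds by (simp add: algebra_simps)
    qed
  qed
  have "mean_payoff w0 \<pi> = ereal alpha" by (rule mp_from_bound[OF bnd])
  then show "eve_wins_play w0 {alpha} \<pi>" unfolding eve_wins_play_def by auto
qed


fun hist :: "(nat list \<Rightarrow> nat) \<Rightarrow> nat \<Rightarrow> nat list" where
  "hist \<sigma> 0 = [0]" | "hist \<sigma> (Suc n) = hist \<sigma> n @ [\<sigma> (hist \<sigma> n)]"

lemma hist_last: "last (hist \<sigma> (Suc n)) = \<sigma> (hist \<sigma> n)"
  by simp

lemma hist_map: "hist \<sigma> n = map (\<lambda>i. last (hist \<sigma> i)) [0..<Suc n]"
proof (induction n)
  case 0 then show ?case by simp
next
  case (Suc n)
  have "hist \<sigma> (Suc n) = hist \<sigma> n @ [last (hist \<sigma> (Suc n))]"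
    by (simp only: hist.simps last_snoc)
  also have "\<dots> = map (\<lambda>i. last (hist \<sigma> i)) [0..<Suc n] @ [last (hist \<sigma> (Suc n))]"
    by (subst Suc.IH) (rule refl)
  also have "\<dots> = map (\<lambda>i. last (hist \<sigma> i)) [0..<Suc (Suc n)]"
    by (simp only: upt_Suc_append[of 0 "Suc n"] map_append list.map zero_le)
  finally show ?case .
qed

lemma no_fm:
  assumes fm: "finite_memory V0 V0 (V0 \<times> V0) 0 \<sigma>"
    and win: "winning_eve V0 (V0 \<times> V0) w0 0 {alpha} \<sigma>"
  shows False
proof -
  from fm[unfolded finite_memory_def] obtain M m0 upd nxt where
    A: "finite (M :: nat set) \<and> m0 \<in> M \<and> (\<forall>m\<in>M. \<forall>v\<in>V0. upd m v \<in> M) \<and>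
        (\<forall>h. is_prefix (V0\<times>V0) 0 h \<and> last h \<in> V0 \<longrightarrow> \<sigma> h = nxt (foldl upd m0 h) (last h))"
    by (elim exE) (erule that)
  have M: "finite M" "m0 \<in> M" "\<forall>m\<in>M. \<forall>v\<in>V0. upd m v \<in> M" using A by simp_all
  have nx: "\<forall>h. is_prefix (V0\<times>V0) 0 h \<and> last h \<in> V0 \<longrightarrow> \<sigma> h = nxt (foldl upd m0 h) (last h)"
    using A by (elim conjE)
  have strat: "eve_strategy V0 (V0\<times>V0) 0 \<sigma>"
    using win unfolding winning_eve_def by (rule conjunct1)
  have wins: "\<forall>\<pi>. is_play (V0\<times>V0) 0 \<pi> \<and> consistent_eve V0 \<sigma> \<pi> \<longrightarrow> eve_wins_play w0 {alpha} \<pi>"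
    using win unfolding winning_eve_def by (rule conjunct2)
  define \<pi> where "\<pi> i = last (hist \<sigma> i)" for i
  have hmap: "hist \<sigma> n = map \<pi> [0..<Suc n]" for n
    using hist_map[of \<sigma> n] unfolding \<pi>_def by simp
  have \<pi>0: "\<pi> 0 = 0" by (simp add: \<pi>_def)
  have \<pi>S: "\<pi> (Suc n) = \<sigma> (map \<pi> [0..<Suc n])" for n
    using hmap[of n] by (simp add: \<pi>_def del: upt_Suc)
  have pref: "is_prefix (V0\<times>V0) 0 (map \<pi> [0..<Suc n])" if "\<forall>j\<le>n. \<pi> j \<in> V0" for n
    unfolding is_prefix_def using that \<pi>0
    by (auto simp: nth_map nth_upt hd_map simp del: upt_Suc)
  have inV: "\<pi> n \<in> V0" for n
  proof (induction n rule: less_induct)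
    case (less n) show ?case
    proof (cases n)
      case 0 then show ?thesis by (simp add: \<pi>0 V0_def)
    next
      case (Suc m)
      have "\<forall>j\<le>m. \<pi> j \<in> V0" using less Suc by auto
      then have "is_prefix (V0\<times>V0) 0 (map \<pi> [0..<Suc m])" by (rule pref)
      moreover have "last (map \<pi> [0..<Suc m]) = \<pi> m" by simp
      moreover have "\<pi> m \<in> V0" using less Suc by auto
      ultimately have "(\<pi> m, \<sigma> (map \<pi> [0..<Suc m])) \<in> V0\<times>V0"
        using strat unfolding eve_strategy_def by metis
      then show ?thesis using Suc \<pi>S by auto
    qed
  qed
  have prefall: "is_prefix (V0\<times>V0) 0 (map \<pi> [0..<Suc n])" for n using pref inV by blast
  have play: "is_play (V0\<times>V0) 0 \<pi>" unfolding is_play_def using \<pi>0 inV by blast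
  have cons: "consistent_eve V0 \<sigma> \<pi>" unfolding consistent_eve_def using \<pi>S by blast
  from wins play cons have "eve_wins_play w0 {alpha} \<pi>" by blast
  then obtain r where r: "mean_payoff w0 \<pi> = ereal r" "r \<in> {alpha}" unfolding eve_wins_play_def by blast
  then have mp: "mean_payoff w0 \<pi> = ereal alpha" by simp
  define mem where "mem n = foldl upd m0 (map \<pi> [0..<Suc n])" for n
  define F where "F = (\<lambda>(m,v). (upd m (nxt m v), nxt m v))"
  have \<pi>S2: "\<pi> (Suc n) = nxt (mem n) (\<pi> n)" for n
  proof -
    have L: "last (map \<pi> [0..<Suc n]) = \<pi> n" by simp
    moreover have "\<sigma> (map \<pi> [0..<Suc n]) = nxt (foldl upd m0 (map \<pi> [0..<Suc n])) (last (map \<pi> [0..<Suc n]))"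
      using spec[OF nx, of "map \<pi> [0..<Suc n]"] prefall[of n] inV[of n] L by (simp del: upt_Suc)
    ultimately show ?thesis using \<pi>S[of n] unfolding mem_def by (simp del: upt_Suc)
  qed
  have memS: "mem (Suc n) = upd (mem n) (\<pi> (Suc n))" for n
    by (simp add: mem_def)
  define s where "s n = (mem n, \<pi> n)" for n
  have sS: "s (Suc n) = F (s n)" for n
    by (simp add: s_def F_def memS \<pi>S2[of n])
  have memM: "mem n \<in> M" for n
  proof (induction n)
    case 0 then show ?case using M inV[of 0] by (simp add: mem_def)
  next
    case (Suc n) then show ?case using M inV[of "Suc n"] memS by simp
  qed
  have "range s \<subseteq> M \<times> V0" using memM inV s_def by auto
  moreover have "finite (M \<times> V0)" using M(1) by (simp add: V0_def)
  ultimately have "finite (range s)" by (rule finite_subset)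
  then have "\<not> inj s" using finite_imageD infinite_UNIV_nat by blast
  then obtain a b where ab: "a \<noteq> b" "s a = s b" unfolding inj_def by blast
  define i where "i = min a b"
  define j where "j = max a b"
  have ij: "i < j" "s i = s j" using ab unfolding i_def j_def by (auto simp: min_def max_def)
  define p where "p = j - i"
  have p: "p > 0" "j = i + p" using ij(1) unfolding p_def by simp_all
  have sper: "s (i + n) = s (i + p + n)" for n
  proof (induction n)
    case 0 show ?case using ij(2) p(2) by simp
  next
    case (Suc n)
    have "s (i + Suc n) = F (s (i + n))" using sS[of "i+n"] by simp
    also have "\<dots> = F (s (i + p + n))" using Suc.IH by simp
    also have "\<dots> = s (i + p + Suc n)" using sS[of "i+p+n"] by simp
    finally show ?case .
  qed
  have \<pi>per: "\<pi> (k + p) = \<pi> k" if "k \<ge> i" for k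
  proof -
    define n where "n = k - i"
    have n: "k = i + n" using that unfolding n_def by simp
    have "\<pi> (i + n) = \<pi> (i + p + n)" using sper[of n] unfolding s_def by simp
    moreover have "k + p = i + p + n" using n by simp
    ultimately show ?thesis unfolding n by metis
  qed
  define d where "d k = w0 (\<pi> k) (\<pi> (Suc k))" for k
  have dper: "d (k + p) = d k" if "k \<ge> i" for k
  proof -
    have "\<pi> (Suc k + p) = \<pi> (Suc k)" using \<pi>per[of "Suc k"] that by simp
    then have "\<pi> (Suc (k + p)) = \<pi> (Suc k)" by simp
    then show ?thesis using \<pi>per[of k] that by (simp add: d_def)
  qed
  have d01: "0 \<le> d k \<and> d k \<le> 1" for k by (simp add: d_def w0_def)
  have pw_eq: "path_weight w0 \<pi> k = (\<Sum>t<k. d t)" for k by (simp add: path_weight_def d_def)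
  define C where "C = (\<Sum>t<p. d (i + t))"
  have dper2: "d (i + n*p + t) = d (i + t)" for n t
  proof (induction n)
    case 0 then show ?case by simp
  next
    case (Suc n)
    have "d (i + Suc n * p + t) = d ((i + n*p + t) + p)" by (simp add: algebra_simps)
    also have "\<dots> = d (i + n*p + t)" by (rule dper) simp
    finally show ?case using Suc by simp
  qed
  have block: "(\<Sum>t< i + n*p. d t) = (\<Sum>t<i. d t) + int n * C" for n
  proof (induction n)
    case 0 then show ?case by simp
  next
    case (Suc n)
    have "(\<Sum>t< i + Suc n*p. d t) = (\<Sum>t< (i + n*p) + p. d t)" by (simp add: algebra_simps)
    also have "\<dots> = (\<Sum>t< i + n*p. d t) + (\<Sum>t<p. d (i + n*p + t))" by (rule sum_split_add)
    also have "(\<Sum>t<p. d (i + n*p + t)) = C" unfolding C_def using dper2 by simp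
    finally show ?case using Suc by (simp add: algebra_simps)
  qed
  have sum_bnd: "0 \<le> (\<Sum>t<r. f t) \<and> (\<Sum>t<r. f t) \<le> int r" if "\<And>t. 0 \<le> f t \<and> f t \<le> 1" for r and f :: "nat \<Rightarrow> int"
  proof (induction r)
    case 0 then show ?case by simp
  next
    case (Suc r) then show ?case using that[of r] by simp
  qed
  have C01: "0 \<le> C \<and> C \<le> int p" unfolding C_def by (rule sum_bnd) (simp add: d01)
  define c where "c = real_of_int C / real p"
  have c01: "0 \<le> c" "c \<le> 1" using C01 p by (auto simp: c_def)
  have bnd: "\<bar>real_of_int (path_weight w0 \<pi> k) - c * real k\<bar> \<le> real (i + p)" for k
  proof (cases "k < i")
    case True
    have "0 \<le> (\<Sum>t<k. d t) \<and> (\<Sum>t<k. d t) \<le> int k" by (rule sum_bnd) (simp add: d01)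
    then have "0 \<le> real_of_int (\<Sum>t<k. d t) \<and> real_of_int (\<Sum>t<k. d t) \<le> real k" by linarith
    moreover have "0 \<le> c * real k" "c * real k \<le> real k" using c01 by (auto simp: mult_left_le_one_le)
    ultimately show ?thesis using True pw_eq by auto
  next
    case False
    define n where "n = (k - i) div p"
    define r where "r = (k - i) mod p"
    have kk: "k = (i + n*p) + r" using False by (simp add: n_def r_def)
    have r: "r < p" using p by (simp add: r_def)
    have "(\<Sum>t<k. d t) = (\<Sum>t< i + n*p. d t) + (\<Sum>t<r. d (i + n*p + t))"
      unfolding kk by (rule sum_split_add)
    also have "\<dots> = (\<Sum>t<i. d t) + int n * C + (\<Sum>t<r. d (i + n*p + t))" using block by simp
    finally have S: "(\<Sum>t<k. d t) = (\<Sum>t<i. d t) + int n * C + (\<Sum>t<r. d (i + n*p + t))" .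
    have b1: "0 \<le> (\<Sum>t<i. d t) \<and> (\<Sum>t<i. d t) \<le> int i" by (rule sum_bnd) (simp add: d01)
    have b2: "0 \<le> (\<Sum>t<r. d (i + n*p + t)) \<and> (\<Sum>t<r. d (i + n*p + t)) \<le> int r"
      by (rule sum_bnd) (simp add: d01)
    have ck: "c * real k = real n * real_of_int C + c * real (i + r)"
      using p unfolding kk c_def by (simp add: field_simps)
    have "0 \<le> c * real (i + r)" "c * real (i + r) \<le> real (i + r)" using c01
      by (auto simp: mult_left_le_one_le)
    moreover have "real_of_int (path_weight w0 \<pi> k) = real_of_int (\<Sum>t<i. d t) + real n * real_of_int C
        + real_of_int (\<Sum>t<r. d (i + n*p + t))" using S pw_eq by simp
    moreover have "real_of_int (\<Sum>t<i. d t) \<le> real i" "0 \<le> real_of_int (\<Sum>t<i. d t)" using b1 by linarith+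
    moreover have "real_of_int (\<Sum>t<r. d (i + n*p + t)) \<le> real r" "0 \<le> real_of_int (\<Sum>t<r. d (i + n*p + t))" using b2 by linarith+
    ultimately show ?thesis using ck r by auto
  qed
  have "mean_payoff w0 \<pi> = ereal c" by (rule mp_from_bound[OF bnd])
  with mp have "alpha = c" by simp
  moreover have "c \<in> \<rat>" unfolding c_def by simp
  ultimately show False using alpha_irr by simp
qed

theorem mainTheorem3:
  shows "\<exists>(V :: nat set) VE E w q0 I.
     game_graph V VE E q0 \<and> finite_interval_union I \<and>
     (\<exists>\<sigma>. winning_eve VE E w q0 I \<sigma>) \<and>
     \<not> (\<exists>\<sigma>. finite_memory V VE E q0 \<sigma> \<and> winning_eve VE E w q0 I \<sigma>)"
proof -
  have "game_graph V0 V0 (V0 \<times> V0) 0" unfolding game_graph_def V0_def by auto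
  moreover have "finite_interval_union {alpha}" unfolding finite_interval_union_def
    by (rule exI[of _ "{{alpha}}"]) (auto intro: is_interval_cc[of alpha alpha, simplified])
  moreover have "\<exists>\<sigma>. winning_eve V0 (V0 \<times> V0) w0 0 {alpha} \<sigma>" using sig_win by blast
  moreover have "\<not> (\<exists>\<sigma>. finite_memory V0 V0 (V0 \<times> V0) 0 \<sigma> \<and> winning_eve V0 (V0 \<times> V0) w0 0 {alpha} \<sigma>)"
    using no_fm by blast
  ultimately have H: "game_graph V0 V0 (V0 \<times> V0) 0 \<and> finite_interval_union {alpha} \<and>
     (\<exists>\<sigma>. winning_eve V0 (V0 \<times> V0) w0 0 {alpha} \<sigma>) \<and>
     \<not> (\<exists>\<sigma>. finite_memory V0 V0 (V0 \<times> V0) 0 \<sigma> \<and> winning_eve V0 (V0 \<times> V0) w0 0 {alpha} \<sigma>)"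
    by (intro conjI)
  show ?thesis by (intro exI) (rule H)
qed

end
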